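(* Let $\lambda,\mu$ be partitions with $\mathrm{core}(\lambda)=\mathrm{core}(\mu)$, and write $\mathrm{quot}(\lambda)=(\lambda^0,\dots,\lambda^{\ell-1})$, $\mathrm{quot}(\mu)=(\mu^0,\dots,\mu^{\ell-1})$. If $|\lambda^i|=|\mu^i|$ and $\lambda^i\ge\mu^i$ in dominance order for every $i$, then $\lambda\ge\mu$ in dominance order.
   Context: Fix $\ell\ge1$. Nodes of a partition $\lambda$ are $(a,b)$ with $1\le a\le\lambda_b$; content $b-a$. Let $n_j(\lambda)$ be the number of nodes of content $j$. Maya diagram $m(\lambda):\mathbb{Z}\to\{\pm1\}$: for $j\ge0$, $m(\lambda)(j)=-1$ if $n_{j+1}-n_j=-1$, else $1$; for $j<0$, $m(\lambda)(j)=1$ if $n_{j+1}-n_j=1$, else $-1$. Charge of $m$: $\#\{j<0:m(j)=-1\}-\#\{j\ge0:m(j)=1\}$; charge-zero Maya diagrams correspond bijectively to partitions. For $0\le i\le\ell-1$, $m_i(j)=m(\lambda)(i+j\ell)$ has charge $c_i$, and its unique charge-zero translate is the Maya diagram of a partition $\lambda^i$. $\mathrm{quot}(\lambda)=(\lambda^0,\dots,\lambda^{\ell-1})$ (the $\ell$-quotient) and $\mathrm{core}(\lambda)=(c_0,\dots,c_{\ell-1})$ (encoding the $\ell$-core). *)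

theory Defs
  imports Main
begin

definition is_partition :: "nat list \<Rightarrow> bool" where
  "is_partition xs \<longleftrightarrow> sorted (rev xs) \<and> (\<forall>x\<in>set xs. 0 < x)"

definition part_entry :: "nat list \<Rightarrow> nat \<Rightarrow> nat" where
  "part_entry xs b = (if 1 \<le> b \<and> b \<le> length xs then xs ! (b - 1) else 0)"

definition nodes :: "nat list \<Rightarrow> (nat \<times> nat) set" where
  "nodes xs = {(a, b). 1 \<le> b \<and> 1 \<le> a \<and> a \<le> part_entry xs b}"

definition ncont :: "nat list \<Rightarrow> int \<Rightarrow> int" where
  "ncont xs j = int (card {(a, b). (a, b) \<in> nodes xs \<and> int b - int a = j})"

definition maya :: "nat list \<Rightarrow> int \<Rightarrow> int" where
  "maya xs j =
     (if 0 \<le> j then (if ncont xs (j + 1) - ncont xs j = -1 then -1 else 1)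
      else (if ncont xs (j + 1) - ncont xs j = 1 then 1 else -1))"

definition charge :: "(int \<Rightarrow> int) \<Rightarrow> int" where
  "charge m = int (card {j. j < 0 \<and> m j = 1}) - int (card {j. 0 \<le> j \<and> m j = -1})"

definition maya_comp :: "nat \<Rightarrow> nat list \<Rightarrow> nat \<Rightarrow> int \<Rightarrow> int" where
  "maya_comp l xs i = (\<lambda>j. maya xs (int i + j * int l))"

definition core :: "nat \<Rightarrow> nat list \<Rightarrow> int list" where
  "core l xs = map (\<lambda>i. charge (maya_comp l xs i)) [0..<l]"

definition quot_comp :: "nat \<Rightarrow> nat list \<Rightarrow> nat \<Rightarrow> nat list" where
  "quot_comp l xs i =
     (THE ys. is_partition ys \<and>
        (\<exists>k. charge (\<lambda>j. maya_comp l xs i (j + k)) = 0 \<and>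
             maya ys = (\<lambda>j. maya_comp l xs i (j + k))))"

definition quot :: "nat \<Rightarrow> nat list \<Rightarrow> nat list list" where
  "quot l xs = map (quot_comp l xs) [0..<l]"

definition dominates :: "nat list \<Rightarrow> nat list \<Rightarrow> bool" where
  "dominates xs ys \<longleftrightarrow> sum_list xs = sum_list ys \<and>
     (\<forall>k. sum_list (take k ys) \<le> sum_list (take k xs))"

end

theory Submission
  imports Defs
begin


lemma pe_beyond: "length xs < b \<Longrightarrow> part_entry xs b = 0"
  by (simp add: part_entry_def)
lemma pe_0[simp]: "part_entry xs 0 = 0" by (simp add: part_entry_def)

lemma pe_mono:
  assumes "is_partition xs" "1 \<le> b" "b \<le> b'"
  shows "part_entry xs b' \<le> part_entry xs b"
proof (cases "b' \<le> length xs")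
  case True
  have "sorted (rev xs)" using assms(1) by (simp add: is_partition_def)
  hence "xs ! (b'-1) \<le> xs ! (b-1)" using sorted_rev_nth_mono[of xs "b-1" "b'-1"] True assms by auto
  thus ?thesis using True assms by (simp add: part_entry_def)
next
  case False thus ?thesis by (simp add: part_entry_def)
qed

lemma pe_pos: "is_partition xs \<Longrightarrow> 1 \<le> b \<Longrightarrow> b \<le> length xs \<Longrightarrow> 0 < part_entry xs b"
  by (auto simp: part_entry_def is_partition_def)

lemma pe_le_sum: "part_entry xs b \<le> sum_list xs"
  by (auto simp: part_entry_def intro!: elem_le_sum_list)

lemma sum_take_pe: "sum_list (take k xs) = (\<Sum>b\<in>{1..k}. part_entry xs b)"
proof (induction k)
  case 0 then show ?case by simp
next
  case (Suc k)
  show ?case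
  proof (cases "k < length xs")
    case True
    have "sum_list (take (Suc k) xs) = sum_list (take k xs) + xs ! k"
      using True by (simp add: take_Suc_conv_app_nth)
    moreover have "part_entry xs (Suc k) = xs ! k" using True by (simp add: part_entry_def)
    ultimately show ?thesis using Suc by simp
  next
    case False
    thus ?thesis using Suc by (simp add: part_entry_def)
  qed
qed



definition Dset :: "nat list \<Rightarrow> int set" where
  "Dset xs = {int b - int (part_entry xs b) | b. 1 \<le> b}"

definition Pset :: "nat list \<Rightarrow> int \<Rightarrow> nat set" where
  "Pset xs j = {b. 1 \<le> b \<and> int b - int (part_entry xs b) \<le> j}"

lemma phi_strict:
  assumes "is_partition xs" "1 \<le> b" "b < b'"
  shows "int b - int (part_entry xs b) < int b' - int (part_entry xs b')"
  using pe_mono[OF assms(1,2), of b'] assms(3) by linarith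

lemma phi_inj:
  assumes "is_partition xs" "1 \<le> b" "1 \<le> b'"
    "int b - int (part_entry xs b) = int b' - int (part_entry xs b')"
  shows "b = b'"
  using phi_strict[OF assms(1,2), of b'] phi_strict[OF assms(1,3), of b] assms(4)
  by (metis less_irrefl linorder_neqE_nat)

lemma Pset_fin: "finite (Pset xs j)"
proof -
  have "Pset xs j \<subseteq> {..length xs + nat j}"
  proof
    fix b assume b: "b \<in> Pset xs j"
    show "b \<in> {..length xs + nat j}"
    proof (rule ccontr)
      assume "b \<notin> {..length xs + nat j}"
      hence "length xs < b" "int b > j" by auto
      with b show False by (simp add: Pset_def pe_beyond)
    qed
  qed
  thus ?thesis by (rule finite_subset) simp
qed

lemma ncont_Pset:
  assumes "is_partition xs"
  shows "ncont xs j = int (card (Pset xs j)) - int (nat j)"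
proof -
  define N where "N = {(a, b). (a, b) \<in> nodes xs \<and> int b - int a = j}"
  define B where "B = {b. 1 \<le> b \<and> 1 \<le> int b - j \<and> int b - j \<le> int (part_entry xs b)}"
  define C where "C = {b::nat. 1 \<le> b \<and> int b \<le> j}"
  have injs: "inj_on snd N" unfolding N_def inj_on_def by auto
  have img: "snd ` N = B"
  proof
    show "snd ` N \<subseteq> B" unfolding N_def B_def nodes_def by auto
    show "B \<subseteq> snd ` N"
    proof
      fix b assume b: "b \<in> B"
      hence "(nat (int b - j), b) \<in> N" unfolding N_def B_def nodes_def by auto
      thus "b \<in> snd ` N" by force
    qed
  qed
  have cN: "card N = card B" using card_image[OF injs] img by simp
  have PBC: "Pset xs j = B \<union> C" unfolding Pset_def B_def C_def by auto
  have disj: "B \<inter> C = {}" unfolding B_def C_def by auto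
  have fP: "finite B" "finite C" using Pset_fin[of xs j] PBC by (auto intro: finite_subset)
  have C1: "C = {1..nat j}" unfolding C_def by auto
  have "card (Pset xs j) = card B + card C" using PBC disj fP card_Un_disjoint by metis
  moreover have "card C = nat j" using C1 by simp
  moreover have "ncont xs j = int (card N)" unfolding ncont_def N_def by simp
  ultimately show ?thesis using cN by simp
qed

lemma Pset_Suc:
  assumes "is_partition xs"
  shows "int (card (Pset xs (j+1))) = int (card (Pset xs j)) + (if j + 1 \<in> Dset xs then 1 else 0)"
proof -
  define E where "E = {b. 1 \<le> b \<and> int b - int (part_entry xs b) = j + 1}"
  have PE: "Pset xs (j+1) = Pset xs j \<union> E" unfolding Pset_def E_def by auto
  have disj: "Pset xs j \<inter> E = {}" unfolding Pset_def E_def by auto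
  have fE: "finite E" using Pset_fin[of xs "j+1"] PE by (auto intro: finite_subset)
  have cE: "card E = (if j + 1 \<in> Dset xs then 1 else 0)"
  proof (cases "j + 1 \<in> Dset xs")
    case True
    then obtain b where b: "1 \<le> b" "j + 1 = int b - int (part_entry xs b)"
      unfolding Dset_def by auto
    have "E = {b}" unfolding E_def using b phi_inj[OF assms] by auto
    thus ?thesis using True by simp
  next
    case False
    hence "E = {}" unfolding E_def Dset_def by force
    thus ?thesis using False by simp
  qed
  show ?thesis using PE disj fE Pset_fin[of xs j] cE by (simp add: card_Un_disjoint)
qed

lemma maya_char:
  assumes "is_partition xs"
  shows "maya xs j = (if j + 1 \<in> Dset xs then 1 else -1)"
proof -
  have d: "ncont xs (j+1) - ncont xs j = (if j + 1 \<in> Dset xs then 1 else 0) - (if 0 \<le> j then 1 else 0)"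
    using ncont_Pset[OF assms, of j] ncont_Pset[OF assms, of "j+1"] Pset_Suc[OF assms, of j]
    by auto
  show ?thesis unfolding maya_def d by auto
qed

lemma maya_pm: "maya xs j = 1 \<or> maya xs j = -1"
  unfolding maya_def by auto



definition Gs :: "int set \<Rightarrow> int \<Rightarrow> int" where
  "Gs H s = (\<Sum>h\<in>{h\<in>H. h \<le> s}. s - h)"

definition hol :: "(int \<Rightarrow> int) \<Rightarrow> int set" where
  "hol m = {j. m j = 1}"

definition tt :: "nat list \<Rightarrow> int \<Rightarrow> nat \<Rightarrow> int" where
  "tt xs c b = int (part_entry xs b) + c - int b"

definition Gl :: "nat list \<Rightarrow> int \<Rightarrow> int" where
  "Gl xs c = (\<Sum>b\<in>{1..length xs + nat c}. max 0 (tt xs c b))"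

lemma tt_neg: "length xs + nat c < b \<Longrightarrow> tt xs c b < 0"
  by (simp add: tt_def pe_beyond)

lemma Gl_ext:
  assumes "length xs + nat c \<le> M"
  shows "Gl xs c = (\<Sum>b\<in>{1..M}. max 0 (tt xs c b))"
  unfolding Gl_def
proof (rule sum.mono_neutral_left)
  show "\<forall>i\<in>{1..M} - {1..length xs + nat c}. max 0 (tt xs c i) = 0"
  proof
    fix i assume "i \<in> {1..M} - {1..length xs + nat c}"
    hence "length xs + nat c < i" by auto
    hence "tt xs c i < 0" by (rule tt_neg)
    thus "max 0 (tt xs c i) = 0" by simp
  qed
qed (use assms in auto)

lemma T_le: "(\<Sum>b\<in>{1..k}. tt xs c b) \<le> Gl xs c"
proof -
  define M where "M = max k (length xs + nat c)"
  have "(\<Sum>b\<in>{1..k}. tt xs c b) \<le> (\<Sum>b\<in>{1..k}. max 0 (tt xs c b))"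
    by (rule sum_mono) simp
  also have "\<dots> \<le> (\<Sum>b\<in>{1..M}. max 0 (tt xs c b))"
    by (rule sum_mono2) (auto simp: M_def)
  also have "\<dots> = Gl xs c" by (rule Gl_ext[symmetric]) (simp add: M_def)
  finally show ?thesis .
qed

lemma tt_mono: "is_partition xs \<Longrightarrow> 1 \<le> b \<Longrightarrow> b \<le> b' \<Longrightarrow> tt xs c b' \<le> tt xs c b"
  using pe_mono[of xs b b'] by (simp add: tt_def)

lemma sum_max_exists:
  fixes t :: "nat \<Rightarrow> int"
  assumes mono: "\<And>b b'. 1 \<le> b \<Longrightarrow> b \<le> b' \<Longrightarrow> t b' \<le> t b"
  shows "\<exists>p. (\<Sum>b\<in>{1..M}. max 0 (t b)) = (\<Sum>b\<in>{1..p}. t b)"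
proof (induction M)
  case 0 show ?case by (rule exI[of _ 0]) simp
next
  case (Suc M)
  then obtain p where p: "(\<Sum>b\<in>{1..M}. max 0 (t b)) = (\<Sum>b\<in>{1..p}. t b)" by blast
  show ?case
  proof (cases "t (Suc M) > 0")
    case True
    have "\<forall>b\<in>{1..Suc M}. max 0 (t b) = t b"
      using mono[of _ "Suc M"] True by force
    hence "(\<Sum>b\<in>{1..Suc M}. max 0 (t b)) = (\<Sum>b\<in>{1..Suc M}. t b)" by (intro sum.cong) auto
    thus ?thesis by blast
  next
    case False
    hence "(\<Sum>b\<in>{1..Suc M}. max 0 (t b)) = (\<Sum>b\<in>{1..M}. max 0 (t b))"
      by (simp add: sum.cl_ivl_Suc)
    thus ?thesis using p by auto
  qed
qed

lemma Gl_exists_T: "is_partition xs \<Longrightarrow> \<exists>p. Gl xs c = (\<Sum>b\<in>{1..p}. tt xs c b)"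
  unfolding Gl_def by (rule sum_max_exists) (rule tt_mono)

lemma Gl_eq_T:
  assumes "\<And>b. 1 \<le> b \<Longrightarrow> b \<le> k \<Longrightarrow> 0 \<le> tt xs c b"
    and "\<And>b. k < b \<Longrightarrow> tt xs c b \<le> 0"
  shows "Gl xs c = (\<Sum>b\<in>{1..k}. tt xs c b)"
proof -
  define M where "M = max k (length xs + nat c)"
  have "Gl xs c = (\<Sum>b\<in>{1..M}. max 0 (tt xs c b))" by (rule Gl_ext) (simp add: M_def)
  also have "\<dots> = (\<Sum>b\<in>{1..k}. max 0 (tt xs c b))"
  proof (rule sum.mono_neutral_right)
    show "\<forall>i\<in>{1..M} - {1..k}. max 0 (tt xs c i) = 0"
    proof
      fix i assume "i \<in> {1..M} - {1..k}"
      hence "k < i" by auto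
      hence "tt xs c i \<le> 0" by (rule assms(2))
      thus "max 0 (tt xs c i) = 0" by simp
    qed
  qed (auto simp: M_def)
  also have "\<dots> = (\<Sum>b\<in>{1..k}. tt xs c b)"
    by (rule sum.cong) (use assms(1) in auto)
  finally show ?thesis .
qed

lemma T_sum: "(\<Sum>b\<in>{1..k}. tt xs c b) = int (sum_list (take k xs)) + (\<Sum>b\<in>{1..k}. c - int b)"
proof -
  have "(\<Sum>b\<in>{1..k}. tt xs c b) = (\<Sum>b\<in>{1..k}. int (part_entry xs b) + (c - int b))"
    by (simp add: tt_def algebra_simps)
  also have "\<dots> = (\<Sum>b\<in>{1..k}. int (part_entry xs b)) + (\<Sum>b\<in>{1..k}. c - int b)"
    by (rule sum.distrib)
  also have "(\<Sum>b\<in>{1..k}. int (part_entry xs b)) = int (sum_list (take k xs))"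
    by (simp add: sum_take_pe)
  finally show ?thesis .
qed

lemma dom_to_G:
  assumes "is_partition ys" "\<forall>k. sum_list (take k ys) \<le> sum_list (take k xs)"
  shows "Gl ys c \<le> Gl xs c"
proof -
  obtain p where p: "Gl ys c = (\<Sum>b\<in>{1..p}. tt ys c b)" using Gl_exists_T[OF assms(1)] by blast
  have "sum_list (take p ys) \<le> sum_list (take p xs)" using assms(2) by blast
  hence "(\<Sum>b\<in>{1..p}. tt ys c b) \<le> (\<Sum>b\<in>{1..p}. tt xs c b)"
    unfolding T_sum by simp
  also have "\<dots> \<le> Gl xs c" by (rule T_le)
  finally show ?thesis using p by simp
qed

lemma G_to_dom:
  assumes "is_partition xs" "\<forall>c. Gl ys c \<le> Gl xs c"
  shows "sum_list (take k ys) \<le> sum_list (take k xs)"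
proof (cases "k = 0")
  case True thus ?thesis by simp
next
  case False
  define c where "c = int k - int (part_entry xs k)"
  have "Gl xs c = (\<Sum>b\<in>{1..k}. tt xs c b)"
  proof (rule Gl_eq_T)
    fix b assume "1 \<le> b" "b \<le> k"
    thus "0 \<le> tt xs c b" using pe_mono[OF assms(1), of b k] by (simp add: tt_def c_def)
  next
    fix b assume "k < b"
    thus "tt xs c b \<le> 0" using pe_mono[OF assms(1), of k b] False by (simp add: tt_def c_def)
  qed
  moreover have "(\<Sum>b\<in>{1..k}. tt ys c b) \<le> Gl ys c" by (rule T_le)
  ultimately have "(\<Sum>b\<in>{1..k}. tt ys c b) \<le> (\<Sum>b\<in>{1..k}. tt xs c b)"
    using assms(2) by (metis order_trans)
  thus ?thesis unfolding T_sum by simp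
qed

lemma Gl_large:
  assumes "int (length xs) \<le> c"
  shows "Gl xs c = int (sum_list xs) + (\<Sum>b\<in>{1..nat c}. c - int b)"
proof -
  have "Gl xs c = (\<Sum>b\<in>{1..nat c}. tt xs c b)"
  proof (rule Gl_eq_T)
    fix b assume "1 \<le> b" "b \<le> nat c" thus "0 \<le> tt xs c b" by (simp add: tt_def)
  next
    fix b assume "nat c < b"
    thus "tt xs c b \<le> 0" using assms by (simp add: tt_def pe_beyond)
  qed
  moreover have "take (nat c) xs = xs" using assms by simp
  ultimately show ?thesis by (metis T_sum)
qed

lemma hol_maya: "is_partition xs \<Longrightarrow> hol (maya xs) = {j. j + 1 \<in> Dset xs}"
  by (auto simp: hol_def maya_char)

lemma Gs_maya:
  assumes "is_partition xs"
  shows "Gs (hol (maya xs)) s = Gl xs (s+1)"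
proof -
  define M where "M = length xs + nat (s+1)"
  define \<phi> where "\<phi> b = int b - int (part_entry xs b) - 1" for b
  define A where "A = {b\<in>{1..M}. \<phi> b \<le> s}"
  have inj: "inj_on \<phi> A"
    unfolding inj_on_def A_def \<phi>_def using phi_inj[OF assms] by auto
  have img: "{h\<in>hol (maya xs). h \<le> s} = \<phi> ` A"
  proof
    show "{h\<in>hol (maya xs). h \<le> s} \<subseteq> \<phi> ` A"
    proof
      fix h assume h: "h \<in> {h\<in>hol (maya xs). h \<le> s}"
      then obtain b where b: "1 \<le> b" "h + 1 = int b - int (part_entry xs b)"
        unfolding hol_maya[OF assms] Dset_def by auto
      have "b \<le> M"
      proof (rule ccontr)
        assume "\<not> b \<le> M"
        hence "part_entry xs b = 0" "int b > s + 1" by (auto simp: M_def pe_beyond)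
        thus False using b h by auto
      qed
      hence "b \<in> A" using b h by (auto simp: A_def \<phi>_def)
      moreover have "h = \<phi> b" using b by (simp add: \<phi>_def)
      ultimately show "h \<in> \<phi> ` A" by blast
    qed
    show "\<phi> ` A \<subseteq> {h\<in>hol (maya xs). h \<le> s}"
      unfolding A_def hol_maya[OF assms] Dset_def \<phi>_def by force
  qed
  have "Gs (hol (maya xs)) s = (\<Sum>b\<in>A. s - \<phi> b)"
    unfolding Gs_def img sum.reindex[OF inj] by simp
  also have "\<dots> = (\<Sum>b\<in>{1..M}. if \<phi> b \<le> s then s - \<phi> b else 0)"
    unfolding A_def by (rule sum.inter_filter) simp
  also have "\<dots> = (\<Sum>b\<in>{1..M}. max 0 (tt xs (s+1) b))"
    by (rule sum.cong) (auto simp: \<phi>_def tt_def)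
  also have "\<dots> = Gl xs (s+1)" by (simp add: Gl_def M_def)
  finally show ?thesis .
qed



definition fin_maya :: "(int \<Rightarrow> int) \<Rightarrow> int \<Rightarrow> bool" where
  "fin_maya m N \<longleftrightarrow> 0 \<le> N \<and> (\<forall>j. m j = 1 \<or> m j = -1) \<and> (\<forall>j. j < -N \<longrightarrow> m j = -1)
     \<and> (\<forall>j. N \<le> j \<longrightarrow> m j = 1)"

lemma fin_mono: "fin_maya m N \<Longrightarrow> N \<le> N' \<Longrightarrow> fin_maya m N'"
  unfolding fin_maya_def by auto

lemma fin_shift: "fin_maya m N \<Longrightarrow> fin_maya (\<lambda>j. m (j + k)) (N + \<bar>k\<bar>)"
  unfolding fin_maya_def by auto

lemma fin_maya_part:
  assumes "is_partition xs"
  shows "fin_maya (maya xs) (int (sum_list xs) + int (length xs) + 1)"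
  unfolding fin_maya_def
proof (intro conjI allI impI)
  fix j :: int
  show "maya xs j = 1 \<or> maya xs j = -1" by (rule maya_pm)
next
  fix j :: int assume j: "j < - (int (sum_list xs) + int (length xs) + 1)"
  have "j + 1 \<notin> Dset xs"
  proof
    assume "j + 1 \<in> Dset xs"
    then obtain b where "1 \<le> b" "j + 1 = int b - int (part_entry xs b)" unfolding Dset_def by auto
    moreover have "part_entry xs b \<le> sum_list xs" by (rule pe_le_sum)
    ultimately show False using j by linarith
  qed
  thus "maya xs j = -1" by (simp add: maya_char[OF assms])
next
  fix j :: int assume j: "int (sum_list xs) + int (length xs) + 1 \<le> j"
  have "j + 1 = int (nat (j+1)) - int (part_entry xs (nat (j+1)))" "1 \<le> nat (j+1)"
    using j by (auto simp: pe_beyond)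
  hence "j + 1 \<in> Dset xs" unfolding Dset_def by blast
  thus "maya xs j = 1" by (simp add: maya_char[OF assms])
qed simp

lemma fin_comp:
  assumes "fin_maya m N" "1 \<le> l" "i < l"
  shows "fin_maya (\<lambda>j. m (int i + j * int l)) N"
  unfolding fin_maya_def
proof (intro conjI allI impI)
  fix j :: int assume j: "j < -N"
  have "(j + 1) * int l \<le> (-N) * int l" using j assms(2) by (intro mult_right_mono) auto
  moreover have "(-N) * int l \<le> -N" using assms(1,2) unfolding fin_maya_def
    by (simp add: mult_le_cancel_left1)
  ultimately have "int i + j * int l < -N" using assms(3) by (simp add: algebra_simps)
  thus "m (int i + j * int l) = -1" using assms(1) unfolding fin_maya_def by blast
next
  fix j :: int assume j: "N \<le> j"
  have "0 \<le> j" using j assms(1) unfolding fin_maya_def by linarith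
  hence "j \<le> j * int l" using assms(2) by (simp add: mult_le_cancel_left1)
  hence "N \<le> int i + j * int l" using j by linarith
  thus "m (int i + j * int l) = 1" using assms(1) unfolding fin_maya_def by blast
qed (use assms(1) in \<open>auto simp: fin_maya_def\<close>)

lemma charge_shift:
  assumes fm: "fin_maya m N" and k: "-N \<le> k" "k \<le> N"
  shows "charge (\<lambda>j. m (j + k)) = k + int (card (hol m \<inter> {-N..<N})) - N"
proof -
  define A where "A = {j. j < 0 \<and> m (j + k) = 1}"
  define B where "B = {j. 0 \<le> j \<and> m (j + k) = -1}"
  have injk: "inj_on (\<lambda>j. j + k) X" for X by (simp add: inj_on_def)
  have iA: "(\<lambda>j. j + k) ` A = hol m \<inter> {-N..<k}"
  proof
    show "(\<lambda>j. j + k) ` A \<subseteq> hol m \<inter> {-N..<k}"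
    proof
      fix h assume "h \<in> (\<lambda>j. j + k) ` A"
      then obtain j where j: "h = j + k" "j < 0" "m (j + k) = 1" unfolding A_def by auto
      have "\<not> (h < -N)" using fm j unfolding fin_maya_def by force
      thus "h \<in> hol m \<inter> {-N..<k}" using j by (auto simp: hol_def)
    qed
    show "hol m \<inter> {-N..<k} \<subseteq> (\<lambda>j. j + k) ` A"
    proof
      fix h assume "h \<in> hol m \<inter> {-N..<k}"
      hence "h - k \<in> A" unfolding A_def hol_def by auto
      thus "h \<in> (\<lambda>j. j + k) ` A" by (metis (no_types, lifting) diff_add_cancel image_eqI)
    qed
  qed
  have iB: "(\<lambda>j. j + k) ` B = {k..<N} - hol m"
  proof
    show "(\<lambda>j. j + k) ` B \<subseteq> {k..<N} - hol m"
    proof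
      fix h assume "h \<in> (\<lambda>j. j + k) ` B"
      then obtain j where j: "h = j + k" "0 \<le> j" "m (j + k) = -1" unfolding B_def by auto
      have "\<not> (N \<le> h)" using fm j unfolding fin_maya_def by force
      thus "h \<in> {k..<N} - hol m" using j by (auto simp: hol_def)
    qed
    show "{k..<N} - hol m \<subseteq> (\<lambda>j. j + k) ` B"
    proof
      fix h assume "h \<in> {k..<N} - hol m"
      hence "h - k \<in> B" using fm unfolding B_def hol_def fin_maya_def by auto
      thus "h \<in> (\<lambda>j. j + k) ` B" by (metis (no_types, lifting) diff_add_cancel image_eqI)
    qed
  qed
  have cA: "card A = card (hol m \<inter> {-N..<k})" using card_image[OF injk[of A]] iA by simp
  have cB: "card B = card ({k..<N} - hol m)" using card_image[OF injk[of B]] iB by simp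
  have "card ({k..<N} - hol m) = card {k..<N} - card ({k..<N} \<inter> hol m)"
    by (metis Diff_Int2 card_Diff_subset_Int finite_Int finite_atLeastLessThan_int inf.idem inf_commute)
  moreover have "card ({k..<N} \<inter> hol m) \<le> card {k..<N}" by (rule card_mono) auto
  moreover have "card {k..<N} = nat (N - k)" by simp
  ultimately have cB': "int (card B) = (N - k) - int (card (hol m \<inter> {k..<N}))"
    using cB k by (simp add: inf_commute)
  have "hol m \<inter> {-N..<N} = (hol m \<inter> {-N..<k}) \<union> (hol m \<inter> {k..<N})" using k by auto
  moreover have "(hol m \<inter> {-N..<k}) \<inter> (hol m \<inter> {k..<N}) = {}" by auto
  ultimately have "card (hol m \<inter> {-N..<N}) = card (hol m \<inter> {-N..<k}) + card (hol m \<inter> {k..<N})"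
    by (simp add: card_Un_disjoint)
  thus ?thesis unfolding charge_def A_def[symmetric] B_def[symmetric] using cA cB' by simp
qed

lemma charge_shift_add:
  assumes "fin_maya m N"
  shows "charge (\<lambda>j. m (j + k)) = k + charge m"
proof -
  have f: "fin_maya m (N + \<bar>k\<bar>)" using fin_mono[OF assms] by simp
  have "0 \<le> N" using assms by (simp add: fin_maya_def)
  have "charge (\<lambda>j. m (j + k)) = k + int (card (hol m \<inter> {-(N + \<bar>k\<bar>)..<N + \<bar>k\<bar>})) - (N + \<bar>k\<bar>)"
    by (rule charge_shift[OF f]) (use \<open>0 \<le> N\<close> in auto)
  moreover have "charge (\<lambda>j. m (j + 0)) = 0 + int (card (hol m \<inter> {-(N + \<bar>k\<bar>)..<N + \<bar>k\<bar>})) - (N + \<bar>k\<bar>)"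
    by (rule charge_shift[OF f]) (use \<open>0 \<le> N\<close> in auto)
  ultimately show ?thesis by simp
qed

lemma hol_shift: "hol (\<lambda>j. m (j + k)) = {j. j + k \<in> hol m}"
  by (simp add: hol_def)

lemma Gs_shift:
  assumes "finite {h\<in>H. h \<le> x + k}"
  shows "Gs {j. j + k \<in> H} x = Gs H (x + k)"
proof -
  have inj: "inj_on (\<lambda>j. j + k) X" for X by (simp add: inj_on_def)
  have img: "(\<lambda>j. j + k) ` {j\<in>{j. j + k \<in> H}. j \<le> x} = {h\<in>H. h \<le> x + k}"
  proof
    show "{h\<in>H. h \<le> x + k} \<subseteq> (\<lambda>j. j + k) ` {j\<in>{j. j + k \<in> H}. j \<le> x}"
    proof
      fix h assume "h \<in> {h\<in>H. h \<le> x + k}"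
      hence "h - k \<in> {j\<in>{j. j + k \<in> H}. j \<le> x}" by auto
      thus "h \<in> (\<lambda>j. j + k) ` {j\<in>{j. j + k \<in> H}. j \<le> x}"
        by (metis (no_types, lifting) diff_add_cancel image_eqI)
    qed
  qed auto
  have "Gs H (x + k) = (\<Sum>h\<in>(\<lambda>j. j + k) ` {j\<in>{j. j + k \<in> H}. j \<le> x}. x + k - h)"
    unfolding Gs_def img ..
  also have "\<dots> = (\<Sum>j\<in>{j\<in>{j. j + k \<in> H}. j \<le> x}. x - j)"
    by (subst sum.reindex[OF inj]) simp
  finally show ?thesis unfolding Gs_def by simp
qed

lemma pe_diff: "1 \<le> b \<Longrightarrow> part_entry xs b = sum_list (take b xs) - sum_list (take (b-1) xs)"
  by (cases b) (auto simp: sum_take_pe sum.cl_ivl_Suc)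

lemma pe_eq_list:
  assumes "is_partition xs" "is_partition ys" "\<And>b. part_entry xs b = part_entry ys b"
  shows "xs = ys"
proof -
  have len: "length xs = length ys"
  proof (rule ccontr)
    assume "length xs \<noteq> length ys"
    hence "length xs < length ys \<or> length ys < length xs" by auto
    thus False
    proof
      assume "length xs < length ys"
      thus False using pe_pos[OF assms(2), of "length ys"] pe_beyond[of xs "length ys"] assms(3) by simp
    next
      assume "length ys < length xs"
      thus False using pe_pos[OF assms(1), of "length xs"] pe_beyond[of ys "length xs"] assms(3) by simp
    qed
  qed
  show ?thesis
  proof (rule nth_equalityI[OF len])
    fix i assume "i < length xs"
    thus "xs ! i = ys ! i" using assms(3)[of "Suc i"] len by (simp add: part_entry_def)
  qed
qed

lemma part_unique:
  assumes "is_partition xs" "is_partition ys" "maya xs = maya ys"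
  shows "xs = ys"
proof -
  have "Gl xs c = Gl ys c" for c
    using Gs_maya[OF assms(1), of "c - 1"] Gs_maya[OF assms(2), of "c - 1"] assms(3) by simp
  hence "sum_list (take k xs) = sum_list (take k ys)" for k
    using G_to_dom[OF assms(1), of ys k] G_to_dom[OF assms(2), of xs k] by (simp add: antisym)
  hence "part_entry xs b = part_entry ys b" for b
    by (cases "b = 0") (simp_all add: pe_diff)
  thus ?thesis using pe_eq_list assms by blast
qed



lemma filt_pe:
  "sorted (rev w) \<Longrightarrow> part_entry (filter (\<lambda>x. 0 < x) w) b = part_entry w b"
proof (induction w rule: rev_induct)
  case Nil thus ?case by simp
next
  case (snoc x w)
  have sw: "sorted (rev w)" and xle: "\<forall>y\<in>set w. x \<le> y" using snoc.prems by auto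
  show ?case
  proof (cases "0 < x")
    case True
    hence "\<forall>y\<in>set w. 0 < y" using xle by fastforce
    hence "filter (\<lambda>x. 0 < x) (w @ [x]) = w @ [x]" using True by (simp add: filter_True)
    thus ?thesis by simp
  next
    case False
    hence x0: "x = 0" by simp
    have "filter (\<lambda>x. 0 < x) (w @ [x]) = filter (\<lambda>x. 0 < x) w" using False by simp
    moreover have "part_entry (w @ [x]) b = part_entry w b"
      using x0 by (auto simp: part_entry_def nth_append)
    ultimately show ?thesis using snoc.IH[OF sw] by simp
  qed
qed

lemma filt_is_part:
  "sorted (rev w) \<Longrightarrow> is_partition (filter (\<lambda>x. 0 < x) w)"
  unfolding is_partition_def by (auto simp: rev_filter intro: sorted_wrt_filter)

lemma strict_gap:
  fixes L :: "int list"
  assumes "sorted_wrt (<) L" "i \<le> j" "j < length L"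
  shows "L ! i + int (j - i) \<le> L ! j"
  using assms(2,3)
proof (induction j)
  case 0 thus ?case by simp
next
  case (Suc j)
  show ?case
  proof (cases "i = Suc j")
    case True thus ?thesis by simp
  next
    case False
    hence "i \<le> j" using Suc by simp
    hence "L ! i + int (j - i) \<le> L ! j" using Suc by simp
    moreover have "L ! j < L ! Suc j" using sorted_wrt_nth_less[OF assms(1), of j "Suc j"] Suc by simp
    ultimately show ?thesis using \<open>i \<le> j\<close> by (simp add: Suc_diff_le)
  qed
qed

lemma exists_part:
  assumes fm: "fin_maya m N" and ch: "charge m = 0"
  shows "\<exists>ys. is_partition ys \<and> maya ys = m"
proof -
  define S where "S = hol m \<inter> {-N..<N}"
  define n where "n = nat N"
  have N0: "0 \<le> N" using fm by (simp add: fin_maya_def)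
  have "charge (\<lambda>j. m (j + 0)) = 0 + int (card S) - N"
    unfolding S_def by (rule charge_shift[OF fm]) (use N0 in auto)
  hence cS: "card S = n" using ch N0 by (simp add: n_def)
  define L where "L = sorted_list_of_set S"
  have fS: "finite S" by (simp add: S_def)
  have lenL: "length L = n" using cS fS by (simp add: L_def)
  have setL: "set L = S" using fS by (simp add: L_def)
  have strL: "sorted_wrt (<) L" by (simp add: L_def)
  have Lin: "L ! i \<in> S" if "i < n" for i using that lenL setL by (metis nth_mem)
  have Lbd: "L ! i \<le> int i" if "i < n" for i
  proof -
    have "L ! i + int (n - 1 - i) \<le> L ! (n - 1)" using strict_gap[OF strL, of i "n-1"] that lenL by simp
    moreover have "L ! (n-1) < N" using Lin[of "n-1"] that by (simp add: S_def)
    ultimately show ?thesis using that N0 by (simp add: n_def)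
  qed
  define v where "v i = int i - L ! i" for i
  define w where "w = map (\<lambda>i. nat (v i)) [0..<n]"
  have sw: "sorted (rev w)" unfolding sorted_rev_iff_nth_mono
  proof (intro allI impI)
    fix i j assume ij: "i \<le> j" "j < length w"
    hence "L ! i + int (j - i) \<le> L ! j" using strict_gap[OF strL ij(1)] lenL by (simp add: w_def)
    thus "w ! j \<le> w ! i" using ij by (simp add: w_def v_def)
  qed
  define ys where "ys = filter (\<lambda>x. 0 < x) w"
  have pys: "is_partition ys" unfolding ys_def by (rule filt_is_part[OF sw])
  have pe_ys: "part_entry ys b = (if 1 \<le> b \<and> b \<le> n then nat (v (b - 1)) else 0)" for b
    unfolding ys_def filt_pe[OF sw] by (auto simp: part_entry_def w_def)
  have vpos: "0 \<le> v i" if "i < n" for i using Lbd[OF that] by (simp add: v_def)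
  have key: "j + 1 \<in> Dset ys \<longleftrightarrow> m j = 1" for j
  proof
    assume "j + 1 \<in> Dset ys"
    then obtain b where b: "1 \<le> b" "j + 1 = int b - int (part_entry ys b)" unfolding Dset_def by auto
    show "m j = 1"
    proof (cases "b \<le> n")
      case True
      hence "j = L ! (b - 1)" using b pe_ys[of b] vpos[of "b-1"] by (simp add: v_def)
      thus ?thesis using Lin[of "b-1"] True b by (simp add: S_def hol_def)
    next
      case False
      hence "N \<le> j" using b pe_ys[of b] by (simp add: n_def)
      thus ?thesis using fm by (simp add: fin_maya_def)
    qed
  next
    assume mj: "m j = 1"
    show "j + 1 \<in> Dset ys"
    proof (cases "N \<le> j")
      case True
      hence "j + 1 = int (nat (j+1)) - int (part_entry ys (nat (j+1)))" "1 \<le> nat (j+1)"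
        using N0 by (auto simp: pe_ys n_def)
      thus ?thesis unfolding Dset_def by blast
    next
      case False
      have "\<not> j < -N" using mj fm by (auto simp: fin_maya_def)
      hence "j \<in> S" using False mj by (simp add: S_def hol_def)
      then obtain i where i: "i < n" "j = L ! i" using setL lenL by (metis in_set_conv_nth)
      have "j + 1 = int (Suc i) - int (part_entry ys (Suc i))" "1 \<le> Suc i"
        using i pe_ys[of "Suc i"] vpos[OF i(1)] by (auto simp: v_def)
      thus ?thesis unfolding Dset_def by blast
    qed
  qed
  have "maya ys = m"
  proof
    fix j
    show "maya ys j = m j"
      using key[of j] maya_char[OF pys, of j] fm by (auto simp: fin_maya_def)
  qed
  thus ?thesis using pys by blast
qed



lemma div_mul_le_int: "(0::int) < l \<Longrightarrow> (a div l) * l \<le> a"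
  using div_mult_mod_eq[of a l] pos_mod_sign[of l a] by linarith

lemma div_ge_int:
  fixes a q l :: int
  assumes "0 < l" "q * l \<le> a"
  shows "q \<le> a div l"
proof (rule ccontr)
  assume "\<not> q \<le> a div l"
  hence "(a div l + 1) * l \<le> q * l" using assms(1) by (intro mult_right_mono) auto
  moreover have "a < (a div l + 1) * l"
  proof -
    have "(a div l + 1) * l = a div l * l + l" by (simp add: distrib_right)
    thus ?thesis using div_mult_mod_eq[of a l] pos_mod_bound[of l a] assms(1) by linarith
  qed
  ultimately show False using assms(2) by simp
qed

lemma runner:
  assumes l: "1 \<le> l" and fin: "finite {h\<in>H. h \<le> s}"
  shows "Gs H s = (\<Sum>i<l. (int l - (s - int i) mod int l) * Gs {j. int i + j * int l \<in> H} ((s - int i) div int l)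
       + ((s - int i) mod int l) * Gs {j. int i + j * int l \<in> H} ((s - int i) div int l + 1))"
proof -
  define L where "L = int l"
  have L0: "0 < L" using l by (simp add: L_def)
  define q where "q i = (s - int i) div L" for i
  define r where "r i = (s - int i) mod L" for i
  define Hi where "Hi i = {j. int i + j * L \<in> H}" for i
  define J where "J i = {j \<in> Hi i. j \<le> q i}" for i
  define emb where "emb i j = int i + j * L" for i j
  have inj: "inj_on (emb i) X" for i X using L0 by (auto simp: inj_on_def emb_def)
  have memJ: "j \<in> J i \<longleftrightarrow> emb i j \<in> H \<and> emb i j \<le> s" for i j
  proof -
    have "j \<le> q i \<longleftrightarrow> emb i j \<le> s"
    proof
      assume "j \<le> q i"
      hence "j * L \<le> q i * L" using L0 by (intro mult_right_mono) auto
      also have "\<dots> \<le> s - int i" unfolding q_def by (rule div_mul_le_int[OF L0])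
      finally show "emb i j \<le> s" by (simp add: emb_def)
    next
      assume "emb i j \<le> s"
      thus "j \<le> q i" unfolding q_def using div_ge_int[OF L0, of j "s - int i"] by (simp add: emb_def)
    qed
    thus ?thesis by (simp add: J_def Hi_def emb_def)
  qed
  have U: "{h\<in>H. h \<le> s} = (\<Union>i\<in>{..<l}. emb i ` J i)"
  proof
    show "{h\<in>H. h \<le> s} \<subseteq> (\<Union>i\<in>{..<l}. emb i ` J i)"
    proof
      fix h assume h: "h \<in> {h\<in>H. h \<le> s}"
      define i where "i = nat (h mod L)"
      have "0 \<le> h mod L" "h mod L < L" using L0 by auto
      hence il: "i < l" and ii: "int i = h mod L" by (auto simp: i_def L_def)
      have he: "h = emb i (h div L)" unfolding emb_def ii by simp
      hence "h div L \<in> J i" using memJ h by auto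
      thus "h \<in> (\<Union>i\<in>{..<l}. emb i ` J i)" using he il by blast
    qed
    show "(\<Union>i\<in>{..<l}. emb i ` J i) \<subseteq> {h\<in>H. h \<le> s}" using memJ by auto
  qed
  have finJ: "finite (J i)" for i
  proof -
    have "emb i ` J i \<subseteq> {h\<in>H. h \<le> s}" using memJ by auto
    hence "finite (emb i ` J i)" using fin by (rule finite_subset)
    thus ?thesis using inj finite_imageD by blast
  qed
  have disj: "emb i ` J i \<inter> emb i' ` J i' = {}" if "i \<in> {..<l}" "i' \<in> {..<l}" "i \<noteq> i'" for i i'
  proof -
    have "emb i j mod L = int i" if "i < l" for i j using that L0 by (simp add: emb_def L_def)
    hence "emb i j mod L = int i" "emb i' j mod L = int i'" for j using that by auto
    thus ?thesis using that(3) by (auto) (metis of_nat_eq_iff)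
  qed
  have "Gs H s = (\<Sum>i<l. \<Sum>h\<in>emb i ` J i. s - h)"
    unfolding Gs_def U by (rule sum.UNION_disjoint) (use finJ disj in auto)
  also have "\<dots> = (\<Sum>i<l. \<Sum>j\<in>J i. s - emb i j)"
    by (rule sum.cong[OF refl]) (simp add: sum.reindex[OF inj])
  also have "\<dots> = (\<Sum>i<l. (L - r i) * Gs (Hi i) (q i) + r i * Gs (Hi i) (q i + 1))"
  proof (rule sum.cong[OF refl])
    fix i assume "i \<in> {..<l}"
    have G1: "Gs (Hi i) (q i) = (\<Sum>j\<in>J i. q i - j)" by (simp add: Gs_def J_def)
    have G2: "Gs (Hi i) (q i + 1) = (\<Sum>j\<in>J i. q i + 1 - j)"
      unfolding Gs_def
    proof (rule sum.mono_neutral_right)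
      have "{j \<in> Hi i. j \<le> q i + 1} \<subseteq> insert (q i + 1) (J i)" by (auto simp: J_def)
      thus "finite {j \<in> Hi i. j \<le> q i + 1}" using finJ by (meson finite_insert finite_subset)
      show "J i \<subseteq> {j \<in> Hi i. j \<le> q i + 1}" by (auto simp: J_def)
      show "\<forall>j\<in>{j \<in> Hi i. j \<le> q i + 1} - J i. q i + 1 - j = 0" by (auto simp: J_def)
    qed
    have sqr: "s - int i = q i * L + r i" by (simp add: q_def r_def)
    have "(L - r i) * Gs (Hi i) (q i) + r i * Gs (Hi i) (q i + 1)
        = (\<Sum>j\<in>J i. (L - r i) * (q i - j) + r i * (q i + 1 - j))"
      unfolding G1 G2 sum_distrib_left sum.distrib ..
    also have "\<dots> = (\<Sum>j\<in>J i. s - emb i j)"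
    proof (rule sum.cong[OF refl])
      fix j
      have e: "(L - r i) * (q i - j) + r i * (q i + 1 - j) = q i * L + r i - j * L"
        by (simp add: algebra_simps)
      show "(L - r i) * (q i - j) + r i * (q i + 1 - j) = s - emb i j"
        using sqr e unfolding emb_def by linarith
    qed
    finally show "(\<Sum>j\<in>J i. s - emb i j) = (L - r i) * Gs (Hi i) (q i) + r i * Gs (Hi i) (q i + 1)" ..
  qed
  finally show ?thesis by (simp add: L_def q_def r_def Hi_def)
qed



lemma hol_fin: "fin_maya m N \<Longrightarrow> finite {h \<in> hol m. h \<le> s}"
proof -
  assume fm: "fin_maya m N"
  have "{h \<in> hol m. h \<le> s} \<subseteq> {-N..s}"
  proof
    fix h assume h: "h \<in> {h \<in> hol m. h \<le> s}"
    hence "\<not> h < -N" using fm by (auto simp: fin_maya_def hol_def)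
    thus "h \<in> {-N..s}" using h by auto
  qed
  thus ?thesis by (rule finite_subset) simp
qed

lemma quot_comp_prop:
  assumes "is_partition xs" "1 \<le> l" "i < l"
  shows "is_partition (quot_comp l xs i) \<and>
    maya (quot_comp l xs i) = (\<lambda>j. maya_comp l xs i (j + - charge (maya_comp l xs i)))"
proof -
  define m where "m = maya_comp l xs i"
  have fm: "fin_maya m (int (sum_list xs) + int (length xs) + 1)"
    unfolding m_def maya_comp_def using fin_comp[OF fin_maya_part[OF assms(1)] assms(2,3)] .
  define k0 where "k0 = - charge m"
  have fm': "fin_maya (\<lambda>j. m (j + k0)) (int (sum_list xs) + int (length xs) + 1 + \<bar>k0\<bar>)"
    by (rule fin_shift[OF fm])
  have ch': "charge (\<lambda>j. m (j + k0)) = 0" using charge_shift_add[OF fm, of k0] k0_def by simp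
  obtain ys0 where ys0: "is_partition ys0" "maya ys0 = (\<lambda>j. m (j + k0))"
    using exists_part[OF fm' ch'] by blast
  have "quot_comp l xs i = ys0"
    unfolding quot_comp_def m_def[symmetric]
  proof (rule the_equality)
    show "is_partition ys0 \<and> (\<exists>k. charge (\<lambda>j. m (j + k)) = 0 \<and> maya ys0 = (\<lambda>j. m (j + k)))"
      using ys0 ch' by blast
  next
    fix ys assume "is_partition ys \<and> (\<exists>k. charge (\<lambda>j. m (j + k)) = 0 \<and> maya ys = (\<lambda>j. m (j + k)))"
    then obtain k where k: "is_partition ys" "charge (\<lambda>j. m (j + k)) = 0" "maya ys = (\<lambda>j. m (j + k))"
      by blast
    have "k = k0" using charge_shift_add[OF fm, of k] k(2) by (simp add: k0_def)
    thus "ys = ys0" using part_unique[OF k(1) ys0(1)] k(3) ys0(2) by simp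
  qed
  thus ?thesis using ys0 by (simp add: m_def k0_def)
qed

lemma runner_part:
  assumes "is_partition xs" "1 \<le> l" "i < l"
  shows "Gs {j. int i + j * int l \<in> hol (maya xs)} q
       = Gl (quot l xs ! i) (q + charge (maya_comp l xs i) + 1)"
proof -
  define m where "m = maya_comp l xs i"
  define k where "k = - charge m"
  have fm: "fin_maya m (int (sum_list xs) + int (length xs) + 1)"
    unfolding m_def maya_comp_def using fin_comp[OF fin_maya_part[OF assms(1)] assms(2,3)] .
  have Q: "quot l xs ! i = quot_comp l xs i" using assms(3) by (simp add: quot_def)
  have P: "is_partition (quot l xs ! i)" "maya (quot l xs ! i) = (\<lambda>j. m (j + k))"
    using quot_comp_prop[OF assms] Q by (simp_all add: m_def k_def)
  have H: "{j. int i + j * int l \<in> hol (maya xs)} = hol m"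
    by (simp add: hol_def m_def maya_comp_def)
  have "Gl (quot l xs ! i) (q + charge m + 1) = Gs (hol (maya (quot l xs ! i))) (q - k)"
    using Gs_maya[OF P(1), of "q - k"] by (simp add: k_def)
  also have "\<dots> = Gs {j. j + k \<in> hol m} (q - k)" unfolding P(2) hol_shift ..
  also have "\<dots> = Gs (hol m) q"
    using Gs_shift[of "hol m" "q - k" k] hol_fin[OF fm, of q] by simp
  finally show ?thesis unfolding H m_def by simp
qed



theorem mainTheorem5:
  fixes l :: nat and lam mu :: "nat list"
  assumes "1 \<le> l"
    and "is_partition lam" and "is_partition mu"
    and "core l lam = core l mu"
    and "\<forall>i<l. sum_list (quot l lam ! i) = sum_list (quot l mu ! i)
                \<and> dominates (quot l lam ! i) (quot l mu ! i)"
  shows "dominates lam mu"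
proof -
  define L where "L = int l"
  have L1: "1 \<le> L" using assms(1) by (simp add: L_def)
  define ch where "ch i = charge (maya_comp l lam i)" for i
  have chEq: "charge (maya_comp l mu i) = ch i" if "i < l" for i
  proof -
    have "core l lam ! i = core l mu ! i" using assms(4) by simp
    thus ?thesis using that by (simp add: core_def ch_def)
  qed
  define yL where "yL i = quot l lam ! i" for i
  define yM where "yM i = quot l mu ! i" for i
  have pL: "is_partition (yL i)" if "i < l" for i
    using quot_comp_prop[OF assms(2,1) that] that by (simp add: yL_def quot_def)
  have pM: "is_partition (yM i)" if "i < l" for i
    using quot_comp_prop[OF assms(3,1) that] that by (simp add: yM_def quot_def)
  define HL where "HL = hol (maya lam)"
  define HM where "HM = hol (maya mu)"
  have RL: "Gs {j. int i + j * L \<in> HL} q = Gl (yL i) (q + ch i + 1)" if "i < l" for i q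
    using runner_part[OF assms(2,1) that] by (simp add: HL_def L_def yL_def ch_def)
  have RM: "Gs {j. int i + j * L \<in> HM} q = Gl (yM i) (q + ch i + 1)" if "i < l" for i q
    using runner_part[OF assms(3,1) that] chEq[OF that] by (simp add: HM_def L_def yM_def)
  have domQ: "Gl (yM i) c \<le> Gl (yL i) c" if "i < l" for i c
    using dom_to_G[OF pM[OF that]] assms(5) that by (simp add: yL_def yM_def dominates_def)
  have finL: "finite {h \<in> HL. h \<le> s}" for s
    unfolding HL_def by (rule hol_fin[OF fin_maya_part[OF assms(2)]])
  have finM: "finite {h \<in> HM. h \<le> s}" for s
    unfolding HM_def by (rule hol_fin[OF fin_maya_part[OF assms(3)]])
  define trm where "trm G i s = (L - (s - int i) mod L) * G i ((s - int i) div L)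
       + ((s - int i) mod L) * G i ((s - int i) div L + 1)" for G :: "nat \<Rightarrow> int \<Rightarrow> int" and i s
  have GL: "Gs HL s = (\<Sum>i<l. trm (\<lambda>i q. Gl (yL i) (q + ch i + 1)) i s)" for s
    unfolding runner[OF assms(1) finL] trm_def L_def[symmetric]
    by (rule sum.cong[OF refl]) (simp add: RL trm_def)
  have GM: "Gs HM s = (\<Sum>i<l. trm (\<lambda>i q. Gl (yM i) (q + ch i + 1)) i s)" for s
    unfolding runner[OF assms(1) finM] trm_def L_def[symmetric]
    by (rule sum.cong[OF refl]) (simp add: RM trm_def)
  have GsLe: "Gs HM s \<le> Gs HL s" for s
    unfolding GL GM
  proof (rule sum_mono)
    fix i assume i: "i \<in> {..<l}"
    have r0: "0 \<le> (s - int i) mod L" "(s - int i) mod L < L" using L1 by auto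
    define r where "r = (s - int i) mod L"
    define q where "q = (s - int i) div L"
    have rl: "r < L" unfolding r_def using L1 by (intro pos_mod_bound) simp
    have r00: "0 \<le> r" unfolding r_def using L1 by simp
    have r0: "0 \<le> r" "0 \<le> L - r" using r00 rl by linarith+
    have il: "i < l" using i by simp
    have A: "(L - r) * Gl (yM i) (q + ch i + 1) \<le> (L - r) * Gl (yL i) (q + ch i + 1)"
      by (rule mult_left_mono[OF domQ[OF il] r0(2)])
    have B: "r * Gl (yM i) (q + 1 + ch i + 1) \<le> r * Gl (yL i) (q + 1 + ch i + 1)"
      by (rule mult_left_mono[OF domQ[OF il] r0(1)])
    show "trm (\<lambda>i q. Gl (yM i) (q + ch i + 1)) i s \<le> trm (\<lambda>i q. Gl (yL i) (q + ch i + 1)) i s"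
      unfolding trm_def r_def[symmetric] q_def[symmetric] using add_mono[OF A B] by simp
  qed
  have GlLe: "Gl mu c \<le> Gl lam c" for c
    using GsLe[of "c - 1"] Gs_maya[OF assms(2), of "c-1"] Gs_maya[OF assms(3), of "c-1"]
    by (simp add: HL_def HM_def)
  have takes: "sum_list (take k mu) \<le> sum_list (take k lam)" for k
    using G_to_dom[OF assms(2)] GlLe by blast
  define C where "C = (\<Sum>i<l. int (length (yL i)) + int (length (yM i)) + \<bar>ch i\<bar>)"
  have Cbd: "int (length (yL i)) + int (length (yM i)) + \<bar>ch i\<bar> \<le> C" if "i < l" for i
    unfolding C_def by (rule member_le_sum) (use that in auto)
  have C0: "0 \<le> C" unfolding C_def by (rule sum_nonneg) auto
  define T where "T = int (length lam) + int (length mu) + L"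
  define s where "s = (C + 1) * L + T"
  have qbig: "C + 1 \<le> (s - int i) div L" if "i < l" for i
  proof (rule div_ge_int)
    show "0 < L" using L1 by simp
    have "int i \<le> T" using that by (simp add: T_def L_def)
    thus "(C + 1) * L \<le> s - int i" by (simp add: s_def)
  qed
  have eqQ: "Gl (yM i) c = Gl (yL i) c" if "i < l" "C + 1 - \<bar>ch i\<bar> \<le> c" for i c
  proof -
    have c1: "int (length (yL i)) \<le> c" "int (length (yM i)) \<le> c" using Cbd[OF that(1)] that(2) by auto
    show ?thesis using Gl_large[OF c1(1)] Gl_large[OF c1(2)] assms(5) that(1)
      by (simp add: yL_def yM_def)
  qed
  have "Gs HM s = Gs HL s"
    unfolding GL GM
  proof (rule sum.cong[OF refl])
    fix i assume i: "i \<in> {..<l}"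
    have a: "C + 1 - \<bar>ch i\<bar> \<le> (s - int i) div L + ch i + 1" using qbig[of i] i by auto
    have b: "C + 1 - \<bar>ch i\<bar> \<le> (s - int i) div L + 1 + ch i + 1" using qbig[of i] i by auto
    show "trm (\<lambda>i q. Gl (yM i) (q + ch i + 1)) i s = trm (\<lambda>i q. Gl (yL i) (q + ch i + 1)) i s"
      unfolding trm_def using eqQ[OF _ a] eqQ[OF _ b] i by simp
  qed
  hence "Gl mu (s + 1) = Gl lam (s + 1)"
    using Gs_maya[OF assms(2), of s] Gs_maya[OF assms(3), of s] by (simp add: HL_def HM_def)
  moreover have "int (length lam) \<le> s + 1" "int (length mu) \<le> s + 1"
    using C0 L1 by (auto simp: s_def T_def)
  ultimately have "sum_list mu = sum_list lam"
    using Gl_large[of lam "s+1"] Gl_large[of mu "s+1"] by simp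
  thus ?thesis unfolding dominates_def using takes by simp
qed


end
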